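(* Let $P$ and $Q$ be Standard Meadow Forms (SMFs). Then each of the terms $P+Q$, $P\cdot Q$, $-P$ and $P^{-1}$ is provably equal, from the axioms $\mathrm{Md}$ in equational logic, to an SMF whose variables are among the variables occurring in $P$ and $Q$.
   Context: The signature of meadows is $\Sigma_m=(0,1,+,\cdot,-,{}^{-1})$. $\mathrm{Md}$ is the set of equations: $(x+y)+z=x+(y+z)$, $x+y=y+x$, $x+0=x$, $x+(-x)=0$, $(x\cdot y)\cdot z=x\cdot(y\cdot z)$, $x\cdot y=y\cdot x$, $1\cdot x=x$, $x\cdot(y+z)=x\cdot y+x\cdot z$, $(x^{-1})^{-1}=x$, $x\cdot(x\cdot x^{-1})=x$. Notation: $t/u$ abbreviates $t\cdot u^{-1}$; $1_t$ abbreviates $t\cdot t^{-1}$ and $0_t$ abbreviates $1-1_t$ (i.e. $1+(-1_t)$). A polynomial is a $\Sigma_m$-term not containing ${}^{-1}$. SMFs of level $n$ are defined inductively: an SMF of level $0$ is any term $s/t$ with $s,t$ polynomials; an SMF of level $n+1$ is any term $0_t\cdot P+1_t\cdot Q$ with $t$ a polynomial and $P,Q$ SMFs of level $n$. A term is an SMF if it is an SMF of some level $n\in\mathbb N$. *)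

theory Defs
  imports Main
begin

datatype mterm =
    Var nat
  | Zero
  | One
  | Add mterm mterm
  | Mul mterm mterm
  | Neg mterm
  | Inv mterm

fun vars :: "mterm \<Rightarrow> nat set" where
  "vars (Var x) = {x}"
| "vars Zero = {}"
| "vars One = {}"
| "vars (Add s t) = vars s \<union> vars t"
| "vars (Mul s t) = vars s \<union> vars t"
| "vars (Neg s) = vars s"
| "vars (Inv s) = vars s"

fun subst :: "(nat \<Rightarrow> mterm) \<Rightarrow> mterm \<Rightarrow> mterm" where
  "subst \<sigma> (Var x) = \<sigma> x"
| "subst \<sigma> Zero = Zero"
| "subst \<sigma> One = One"
| "subst \<sigma> (Add s t) = Add (subst \<sigma> s) (subst \<sigma> t)"
| "subst \<sigma> (Mul s t) = Mul (subst \<sigma> s) (subst \<sigma> t)"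
| "subst \<sigma> (Neg s) = Neg (subst \<sigma> s)"
| "subst \<sigma> (Inv s) = Inv (subst \<sigma> s)"

definition Md :: "(mterm \<times> mterm) set" where
  "Md = (let x = Var 0; y = Var 1; z = Var 2 in
     { (Add (Add x y) z, Add x (Add y z)),
       (Add x y, Add y x),
       (Add x Zero, x),
       (Add x (Neg x), Zero),
       (Mul (Mul x y) z, Mul x (Mul y z)),
       (Mul x y, Mul y x),
       (Mul One x, x),
       (Mul x (Add y z), Add (Mul x y) (Mul x z)),
       (Inv (Inv x), x),
       (Mul x (Mul x (Inv x)), x) })"

inductive eq_deriv :: "(mterm \<times> mterm) set \<Rightarrow> mterm \<Rightarrow> mterm \<Rightarrow> bool" for E where
  ax: "(s, t) \<in> E \<Longrightarrow> eq_deriv E s t"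
| refl: "eq_deriv E t t"
| sym: "eq_deriv E s t \<Longrightarrow> eq_deriv E t s"
| trans: "eq_deriv E s t \<Longrightarrow> eq_deriv E t u \<Longrightarrow> eq_deriv E s u"
| inst: "eq_deriv E s t \<Longrightarrow> eq_deriv E (subst \<sigma> s) (subst \<sigma> t)"
| cong_add: "eq_deriv E s1 t1 \<Longrightarrow> eq_deriv E s2 t2 \<Longrightarrow> eq_deriv E (Add s1 s2) (Add t1 t2)"
| cong_mul: "eq_deriv E s1 t1 \<Longrightarrow> eq_deriv E s2 t2 \<Longrightarrow> eq_deriv E (Mul s1 s2) (Mul t1 t2)"
| cong_neg: "eq_deriv E s t \<Longrightarrow> eq_deriv E (Neg s) (Neg t)"
| cong_inv: "eq_deriv E s t \<Longrightarrow> eq_deriv E (Inv s) (Inv t)"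

definition mdiv :: "mterm \<Rightarrow> mterm \<Rightarrow> mterm" where
  "mdiv t u = Mul t (Inv u)"

definition one_of :: "mterm \<Rightarrow> mterm" where
  "one_of t = Mul t (Inv t)"

definition zero_of :: "mterm \<Rightarrow> mterm" where
  "zero_of t = Add One (Neg (one_of t))"

fun polynomial :: "mterm \<Rightarrow> bool" where
  "polynomial (Var x) = True"
| "polynomial Zero = True"
| "polynomial One = True"
| "polynomial (Add s t) = (polynomial s \<and> polynomial t)"
| "polynomial (Mul s t) = (polynomial s \<and> polynomial t)"
| "polynomial (Neg s) = polynomial s"
| "polynomial (Inv s) = False"

inductive smf_level :: "nat \<Rightarrow> mterm \<Rightarrow> bool" where
  level0: "polynomial s \<Longrightarrow> polynomial t \<Longrightarrow> smf_level 0 (mdiv s t)"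
| levelSuc: "polynomial t \<Longrightarrow> smf_level n P \<Longrightarrow> smf_level n Q \<Longrightarrow>
     smf_level (Suc n) (Add (Mul (zero_of t) P) (Mul (one_of t) Q))"

definition smf :: "mterm \<Rightarrow> bool" where
  "smf t \<longleftrightarrow> (\<exists>n. smf_level n t)"

end

theory Submission
  imports Defs "HOL.Real"
begin

lemma equivp_md: "equivp (eq_deriv Md)"
  by (intro equivpI reflpI sympI transpI) (auto intro: eq_deriv.intros)

fun ev :: "(nat \<Rightarrow> real) \<Rightarrow> mterm \<Rightarrow> real" where
  "ev \<rho> (Var x) = \<rho> x"
| "ev \<rho> Zero = 0"
| "ev \<rho> One = 1"
| "ev \<rho> (Add s t) = ev \<rho> s + ev \<rho> t"
| "ev \<rho> (Mul s t) = ev \<rho> s * ev \<rho> t"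
| "ev \<rho> (Neg s) = - ev \<rho> s"
| "ev \<rho> (Inv s) = inverse (ev \<rho> s)"

lemma ev_subst: "ev \<rho> (subst \<sigma> t) = ev (\<lambda>n. ev \<rho> (\<sigma> n)) t"
  by (induction t) auto

lemma rinv: "(r::real) * (r * inverse r) = r" by (cases "r = 0") auto

lemma sound: "eq_deriv Md s t \<Longrightarrow> ev \<rho> s = ev \<rho> t"
proof (induction arbitrary: \<rho> rule: eq_deriv.induct)
  case (ax s t)
  then show ?case by (auto simp: Md_def Let_def algebra_simps rinv)
next
  case (inst s t \<sigma>)
  then show ?case by (simp add: ev_subst)
qed auto

lemma not01: "\<not> eq_deriv Md Zero One"
  using sound[of Zero One "\<lambda>_. 0"] by auto

quotient_type m = mterm / "eq_deriv Md" by (rule equivp_md)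

lemma axI: "(a, b) \<in> Md \<Longrightarrow>
  eq_deriv Md (subst (\<lambda>n. if n = 0 then x else if n = 1 then y else z) a)
              (subst (\<lambda>n. if n = 0 then x else if n = 1 then y else z) b)"
  by (rule eq_deriv.inst, rule eq_deriv.ax)

lemma md0: "eq_deriv Md (Add (Add x y) z) (Add x (Add y z))"
  using axI[of "Add (Add (Var 0) (Var 1)) (Var 2)" "Add (Var 0) (Add (Var 1) (Var 2))" x y z] by (simp add: Md_def Let_def)

lemma md1: "eq_deriv Md (Add x y) (Add y x)"
  using axI[of "Add (Var 0) (Var 1)" "Add (Var 1) (Var 0)" x y z] by (simp add: Md_def Let_def)

lemma md2: "eq_deriv Md (Add x Zero) (x)"
  using axI[of "Add (Var 0) Zero" "(Var 0)" x y z] by (simp add: Md_def Let_def)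

lemma md3: "eq_deriv Md (Add x (Neg x)) (Zero)"
  using axI[of "Add (Var 0) (Neg (Var 0))" "Zero" x y z] by (simp add: Md_def Let_def)

lemma md4: "eq_deriv Md (Mul (Mul x y) z) (Mul x (Mul y z))"
  using axI[of "Mul (Mul (Var 0) (Var 1)) (Var 2)" "Mul (Var 0) (Mul (Var 1) (Var 2))" x y z] by (simp add: Md_def Let_def)

lemma md5: "eq_deriv Md (Mul x y) (Mul y x)"
  using axI[of "Mul (Var 0) (Var 1)" "Mul (Var 1) (Var 0)" x y z] by (simp add: Md_def Let_def)

lemma md6: "eq_deriv Md (Mul One x) (x)"
  using axI[of "Mul One (Var 0)" "(Var 0)" x y z] by (simp add: Md_def Let_def)

lemma md7: "eq_deriv Md (Mul x (Add y z)) (Add (Mul x y) (Mul x z))"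
  using axI[of "Mul (Var 0) (Add (Var 1) (Var 2))" "Add (Mul (Var 0) (Var 1)) (Mul (Var 0) (Var 2))" x y z] by (simp add: Md_def Let_def)

lemma md8: "eq_deriv Md (Inv (Inv x)) (x)"
  using axI[of "Inv (Inv (Var 0))" "(Var 0)" x y z] by (simp add: Md_def Let_def)

lemma md9: "eq_deriv Md (Mul x (Mul x (Inv x))) (x)"
  using axI[of "Mul (Var 0) (Mul (Var 0) (Inv (Var 0)))" "(Var 0)" x y z] by (simp add: Md_def Let_def)

lemmas ED = eq_deriv.intros

instantiation m :: comm_ring_1
begin
lift_definition zero_m :: m is Zero .
lift_definition one_m :: m is One .
lift_definition plus_m :: "m \<Rightarrow> m \<Rightarrow> m" is Add by (rule eq_deriv.cong_add)
lift_definition times_m :: "m \<Rightarrow> m \<Rightarrow> m" is Mul by (rule eq_deriv.cong_mul)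
lift_definition uminus_m :: "m \<Rightarrow> m" is Neg by (rule eq_deriv.cong_neg)
lift_definition minus_m :: "m \<Rightarrow> m \<Rightarrow> m" is "\<lambda>a b. Add a (Neg b)"
  by (intro eq_deriv.cong_add eq_deriv.cong_neg)
instance
proof
  fix a b c :: m
  show "a + b + c = a + (b + c)" by transfer (rule md0)
  show "a + b = b + a" by transfer (rule md1)
  show "0 + a = a" by transfer (meson md1 md2 ED)
  show "- a + a = 0" by transfer (meson md1 md3 ED)
  show "a - b = a + - b" by transfer (rule ED)
  show "a * b * c = a * (b * c)" by transfer (rule md4)
  show "a * b = b * a" by transfer (rule md5)
  show "1 * a = a" by transfer (rule md6)
  show "(a + b) * c = a * c + b * c" by transfer (meson md5 md7 ED)
  show "(0::m) \<noteq> 1" by transfer (rule not01)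
qed
end

lift_definition minv :: "m \<Rightarrow> m" is Inv by (rule eq_deriv.cong_inv)

lemma inv_inv[simp]: "minv (minv x) = x" by transfer (rule md8)
lemma inv_ax: "x * (x * minv x) = x" by transfer (rule md9)


lemma absA: "abs_m (Add a b) = abs_m a + abs_m b" by (simp add: plus_m.abs_eq)
lemma absM: "abs_m (Mul a b) = abs_m a * abs_m b" by (simp add: times_m.abs_eq)
lemma absN: "abs_m (Neg a) = - abs_m a" by (simp add: uminus_m.abs_eq)
lemma absI: "abs_m (Inv a) = minv (abs_m a)" by (simp add: minv.abs_eq)
lemma absZ: "abs_m Zero = 0" by (simp add: zero_m.abs_eq)
lemma absO: "abs_m One = 1" by (simp add: one_m.abs_eq)
lemmas absS = absA absM absN absI absZ absO

definition cnd :: "m \<Rightarrow> m \<Rightarrow> m \<Rightarrow> m" where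
  "cnd t a b = (1 - t * minv t) * a + (t * minv t) * b"

abbreviation C :: "mterm \<Rightarrow> mterm \<Rightarrow> mterm \<Rightarrow> mterm" where
  "C t P Q \<equiv> Add (Mul (zero_of t) P) (Mul (one_of t) Q)"

lemma absC: "abs_m (C t P Q) = cnd (abs_m t) (abs_m P) (abs_m Q)"
  by (simp add: absS zero_of_def one_of_def cnd_def)

lemma absD: "abs_m (mdiv s t) = abs_m s * minv (abs_m t)"
  by (simp add: absS mdiv_def)

lemma inv_ax2: "minv x * (minv x * x) = minv x"
  using inv_ax[of "minv x"] by simp

lemma uniq:
  assumes "a * b * a = a" "b * a * b = b"
  shows "b = minv a"
proof -
  define c where "c = minv a"
  have 1: "a * c * a = a" using inv_ax[of a] by (simp add: c_def algebra_simps)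
  have 2: "c * a * c = c" using inv_ax2[of a] by (simp add: c_def algebra_simps)
  have "b = c * (a * b)"
  proof -
    have "b = b * (a * c * a) * b" using assms 1 by (simp add: mult.assoc)
    also have "\<dots> = c * ((a * b) * (a * b))" by (simp add: algebra_simps)
    also have "(a * b) * (a * b) = a * b" using assms(1) by (metis mult.assoc)
    finally show ?thesis .
  qed
  moreover have "c = b * (a * c)"
  proof -
    have "c = c * (a * b * a) * c" using assms 2 by (simp add: mult.assoc)
    also have "\<dots> = b * ((a * c) * (a * c))" by (simp add: algebra_simps)
    also have "(a * c) * (a * c) = a * c" using 1 by (metis mult.assoc)
    finally show ?thesis .
  qed
  ultimately show ?thesis unfolding c_def by (simp add: algebra_simps)
qed

lemma inv_mult: "minv (x * y) = minv x * minv y"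
proof (rule uniq[symmetric])
  show "x * y * (minv x * minv y) * (x * y) = x * y"
    using inv_ax[of x] inv_ax[of y] by (simp add: algebra_simps) (metis mult.assoc mult.commute)
  show "minv x * minv y * (x * y) * (minv x * minv y) = minv x * minv y"
    using inv_ax2[of x] inv_ax2[of y] by (simp add: algebra_simps) (metis mult.assoc mult.commute)
qed


lemma cndlem:
  fixes e f a a' b b' :: "'a::comm_ring_1"
  assumes e: "e*e = e" and f: "f*f = f" and ef: "e*f = 0" and A: "a*a'*a = a" and B: "b*b'*b = b"
  shows "(f*a+e*b)*(f*a'+e*b')*(f*a+e*b) = f*a+e*b"
proof -
  have "(f*a+e*b)*(f*a'+e*b') = (f*f)*(a*a') + (e*f)*(a*b'+b*a') + (e*e)*(b*b')"
    by (simp add: algebra_simps)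
  also have "\<dots> = f*(a*a') + e*(b*b')" using e f ef by simp
  finally have 1: "(f*a+e*b)*(f*a'+e*b') = f*(a*a') + e*(b*b')" .
  have "(f*(a*a') + e*(b*b'))*(f*a+e*b) = (f*f)*(a*a'*a) + (e*f)*(a*a'*b+b*b'*a) + (e*e)*(b*b'*b)"
    by (simp add: algebra_simps)
  also have "\<dots> = f*a + e*b" using e f ef A B by simp
  finally show ?thesis using 1 by simp
qed

lemma idem: "(t * minv t) * (t * minv t) = t * minv t"
  using inv_ax[of t] by (metis mult.assoc mult.commute)

lemma idem_facts:
  fixes e :: m
  assumes "e * e = e"
  shows "(1 - e) * (1 - e) = 1 - e" "e * (1 - e) = 0"
proof -
  have "(1 - e) * (1 - e) = 1 - e - e + e * e" by (simp add: algebra_simps)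
  then show "(1 - e) * (1 - e) = 1 - e" using assms by simp
  have "e * (1 - e) = e - e * e" by (simp add: algebra_simps)
  then show "e * (1 - e) = 0" using assms by simp
qed

lemma inv_cnd: "minv (cnd t a b) = cnd t (minv a) (minv b)"
proof (rule uniq[symmetric])
  let ?e = "t * minv t"
  have e: "?e * ?e = ?e" by (rule idem)
  note f = idem_facts[OF e]
  have a1: "a * minv a * a = a" and a2: "minv a * a * minv a = minv a"
    and b1: "b * minv b * b = b" and b2: "minv b * b * minv b = minv b"
    using inv_ax[of a] inv_ax2[of a] inv_ax[of b] inv_ax2[of b] by (simp_all add: algebra_simps)
  have "cnd t a b = (1 - ?e) * a + ?e * b" "cnd t (minv a) (minv b) = (1 - ?e) * minv a + ?e * minv b"
    by (simp_all add: cnd_def)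
  then show "cnd t a b * cnd t (minv a) (minv b) * cnd t a b = cnd t a b"
    "cnd t (minv a) (minv b) * cnd t a b * cnd t (minv a) (minv b) = cnd t (minv a) (minv b)"
    using cndlem[OF e f(1) _ a1 b1] cndlem[OF e f(1) _ a2 b2] f(2) by (simp_all add: mult.commute)
qed

lemma cnd_same: "cnd t x x = x" by (simp add: cnd_def algebra_simps)

lemma add_base:
  "cnd T (cnd V (U * minv V) (U * minv V)) (cnd V (S * minv T) ((S * V + U * T) * minv (T * V)))
   = S * minv T + U * minv V"
proof -
  define e where "e = T * minv T"
  define f where "f = V * minv V"
  define X where "X = U * minv V"
  define Y where "Y = S * minv T"
  have ee: "e * e = e" unfolding e_def by (rule idem)
  have ff: "f * f = f" unfolding f_def by (rule idem)
  have fX: "f * X = X" unfolding f_def X_def using inv_ax2[of V] by (metis mult.assoc mult.commute)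
  have eY: "e * Y = Y" unfolding e_def Y_def using inv_ax2[of T] by (metis mult.assoc mult.commute)
  have 1: "(S * V + U * T) * minv (T * V) = Y * f + X * e"
    unfolding inv_mult X_def Y_def e_def f_def by (simp add: algebra_simps)
  have "f * (Y * f + X * e) = Y * (f * f) + e * (f * X)" by (simp add: algebra_simps)
  also have "\<dots> = Y * f + e * X" using ff fX by simp
  finally have 2: "f * (Y * f + X * e) = Y * f + e * X" .
  have "cnd V Y ((S * V + U * T) * minv (T * V)) = (1 - f) * Y + (Y * f + e * X)"
    unfolding cnd_def f_def[symmetric] 1 2 ..
  also have "\<dots> = Y + e * X" by (simp add: algebra_simps)
  finally have 3: "cnd V Y ((S * V + U * T) * minv (T * V)) = Y + e * X" .
  have "(1 - e) * X + e * (Y + e * X) = X + e * Y + (e * e - e) * X" by (simp add: algebra_simps)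
  also have "\<dots> = Y + X" using ee eY by simp
  finally have 4: "(1 - e) * X + e * (Y + e * X) = Y + X" .
  show ?thesis
    unfolding X_def[symmetric] Y_def[symmetric] cnd_same 3
    unfolding cnd_def e_def[symmetric] 4 ..
qed


lemma cnd_addL: "cnd t a b + c = cnd t (a + c) (b + c)" by (simp add: cnd_def algebra_simps)
lemma cnd_addR: "c + cnd t a b = cnd t (c + a) (c + b)" by (simp add: cnd_def algebra_simps)
lemma cnd_mulL: "cnd t a b * c = cnd t (a * c) (b * c)" by (simp add: cnd_def algebra_simps)
lemma cnd_mulR: "c * cnd t a b = cnd t (c * a) (c * b)" by (simp add: cnd_def algebra_simps)
lemma cnd_neg: "- cnd t a b = cnd t (- a) (- b)" by (simp add: cnd_def algebra_simps)

lemma abs_zo: "abs_m (zero_of t) = 1 - abs_m t * minv (abs_m t)"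
  by (simp add: zero_of_def one_of_def absS)
lemma abs_oo: "abs_m (one_of t) = abs_m t * minv (abs_m t)"
  by (simp add: one_of_def absS)
lemma vars_zo: "vars (zero_of t) = vars t" "vars (one_of t) = vars t"
  by (auto simp: zero_of_def one_of_def)

lemma vars_C: "vars (C t P Q) = vars t \<union> vars P \<union> vars Q"
  by (auto simp: zero_of_def one_of_def)

lemma lift: "smf_level n R \<Longrightarrow> \<exists>R'. smf_level (n + k) R' \<and> vars R' \<subseteq> vars R \<and> abs_m R' = abs_m R"
proof (induction k)
  case 0 then show ?case by auto
next
  case (Suc k)
  then obtain R' where R': "smf_level (n + k) R'" "vars R' \<subseteq> vars R" "abs_m R' = abs_m R" by blast
  have "smf_level (Suc (n + k)) (C Zero R' R')" by (rule levelSuc) (use R' in auto)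
  moreover have "abs_m (C Zero R' R') = abs_m R" using R' by (simp add: absC cnd_same)
  moreover have "vars (C Zero R' R') \<subseteq> vars R" using R' by (simp add: vars_zo)
  ultimately show ?case by (metis add_Suc_right)
qed

definition good :: "mterm \<Rightarrow> bool" where
  "good X \<longleftrightarrow> (\<exists>R. smf R \<and> vars R \<subseteq> vars X \<and> abs_m R = abs_m X)"

lemma good_cnd:
  assumes t: "polynomial t" and X: "good X" and Y: "good Y"
    and Z: "abs_m Z = cnd (abs_m t) (abs_m X) (abs_m Y)"
    and V: "vars t \<union> vars X \<union> vars Y \<subseteq> vars Z"
  shows "good Z"
proof -
  obtain A n where A: "smf_level n A" "vars A \<subseteq> vars X" "abs_m A = abs_m X"
    using X by (auto simp: good_def smf_def)
  obtain B m where B: "smf_level m B" "vars B \<subseteq> vars Y" "abs_m B = abs_m Y"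
    using Y by (auto simp: good_def smf_def)
  obtain A' where A': "smf_level (max n m) A'" "vars A' \<subseteq> vars A" "abs_m A' = abs_m A"
    using lift[OF A(1), of "max n m - n"] by auto
  obtain B' where B': "smf_level (max n m) B'" "vars B' \<subseteq> vars B" "abs_m B' = abs_m B"
    using lift[OF B(1), of "max n m - m"] by auto
  have "smf_level (Suc (max n m)) (C t A' B')" using t A' B' by (intro levelSuc)
  then have "smf (C t A' B')" by (auto simp: smf_def)
  moreover have "vars (C t A' B') \<subseteq> vars Z" using A A' B B' V by (auto simp: vars_zo)
  moreover have "abs_m (C t A' B') = abs_m Z" using A A' B B' Z by (simp add: absC)
  ultimately show ?thesis unfolding good_def by blast
qed

lemma good_base: "smf_level 0 R \<Longrightarrow> vars R \<subseteq> vars X \<Longrightarrow> abs_m R = abs_m X \<Longrightarrow> good X"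
  unfolding good_def smf_def by blast

lemma level0E: "smf_level 0 P \<Longrightarrow> (\<And>s t. P = mdiv s t \<Longrightarrow> polynomial s \<Longrightarrow> polynomial t \<Longrightarrow> thesis) \<Longrightarrow> thesis"
  by (cases rule: smf_level.cases) auto

lemma mdiv_vars: "vars (mdiv s t) = vars s \<union> vars t" by (simp add: mdiv_def)

lemma good_add_0:
  assumes Q: "smf_level m Q" and P: "P = mdiv s t" "polynomial s" "polynomial t"
  shows "good (Add P Q)"
  using Q
proof (induction rule: smf_level.induct)
  case (level0 u v)
  let ?R = "C t (C v (mdiv u v) (mdiv u v)) (C v (mdiv s t) (mdiv (Add (Mul s v) (Mul u t)) (Mul t v)))"
  have "smf_level (Suc (Suc 0)) ?R" using level0 P
    by (intro smf_level.intros) auto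
  then show ?case
    unfolding good_def smf_def
    apply (rule_tac x="?R" in exI)
    using P add_base[of "abs_m t" "abs_m v" "abs_m u" "abs_m s", unfolded cnd_def]
    by (auto simp: vars_zo mdiv_vars absD absS abs_zo abs_oo)
next
  case (levelSuc t' n Q1 Q2)
  show ?case
    by (rule good_cnd[OF levelSuc(1,4,5)]) (auto simp: absS abs_zo abs_oo cnd_def algebra_simps vars_zo)
qed

lemma good_add: "smf_level n P \<Longrightarrow> smf Q \<Longrightarrow> good (Add P Q)"
proof (induction arbitrary: Q rule: smf_level.induct)
  case (level0 s t)
  then show ?case using good_add_0 by (auto simp: smf_def)
next
  case (levelSuc t n P1 P2)
  show ?case
    by (rule good_cnd[OF levelSuc(1) levelSuc(4)[OF levelSuc(6)] levelSuc(5)[OF levelSuc(6)]])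
       (auto simp: absS abs_zo abs_oo cnd_def algebra_simps vars_zo)
qed

lemma good_mul_0:
  assumes Q: "smf_level m Q" and P: "P = mdiv s t" "polynomial s" "polynomial t"
  shows "good (Mul P Q)"
  using Q
proof (induction rule: smf_level.induct)
  case (level0 u v)
  have "smf_level 0 (mdiv (Mul s u) (Mul t v))" using level0 P by (intro smf_level.intros) auto
  then show ?case
    by (rule good_base) (use P in \<open>auto simp: mdiv_vars absD absS inv_mult algebra_simps\<close>)
next
  case (levelSuc t' n Q1 Q2)
  show ?case
    by (rule good_cnd[OF levelSuc(1,4,5)]) (auto simp: absS abs_zo abs_oo cnd_def algebra_simps vars_zo)
qed

lemma good_mul: "smf_level n P \<Longrightarrow> smf Q \<Longrightarrow> good (Mul P Q)"
proof (induction arbitrary: Q rule: smf_level.induct)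
  case (level0 s t)
  then show ?case using good_mul_0 by (auto simp: smf_def)
next
  case (levelSuc t n P1 P2)
  show ?case
    by (rule good_cnd[OF levelSuc(1) levelSuc(4)[OF levelSuc(6)] levelSuc(5)[OF levelSuc(6)]])
       (auto simp: absS abs_zo abs_oo cnd_def algebra_simps vars_zo)
qed

lemma good_neg: "smf_level n P \<Longrightarrow> good (Neg P)"
proof (induction rule: smf_level.induct)
  case (level0 s t)
  have "smf_level 0 (mdiv (Neg s) t)" using level0 by (intro smf_level.intros) auto
  then show ?case
    by (rule good_base) (auto simp: mdiv_vars absD absS)
next
  case (levelSuc t n P1 P2)
  show ?case
    by (rule good_cnd[OF levelSuc(1,4,5)]) (auto simp: absS abs_zo abs_oo cnd_def algebra_simps vars_zo)
qed

lemma good_inv: "smf_level n P \<Longrightarrow> good (Inv P)"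
proof (induction rule: smf_level.induct)
  case (level0 s t)
  have "smf_level 0 (mdiv t s)" using level0 by (intro smf_level.intros) auto
  then show ?case
    by (rule good_base) (auto simp: mdiv_vars absD absS inv_mult mult.commute)
next
  case (levelSuc t n P1 P2)
  show ?case
    by (rule good_cnd[OF levelSuc(1,4,5)]) (auto simp: absS abs_zo abs_oo inv_cnd[unfolded cnd_def] cnd_def vars_zo)
qed

lemma good_eq: "good X \<Longrightarrow> \<exists>R. smf R \<and> vars R \<subseteq> vars X \<and> eq_deriv Md X R"
  unfolding good_def by (metis m.abs_eq_iff)

theorem lemma1:
  assumes "smf P" and "smf Q"
  shows "(\<exists>R. smf R \<and> vars R \<subseteq> vars P \<union> vars Q \<and> eq_deriv Md (Add P Q) R)
       \<and> (\<exists>R. smf R \<and> vars R \<subseteq> vars P \<union> vars Q \<and> eq_deriv Md (Mul P Q) R)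
       \<and> (\<exists>R. smf R \<and> vars R \<subseteq> vars P \<union> vars Q \<and> eq_deriv Md (Neg P) R)
       \<and> (\<exists>R. smf R \<and> vars R \<subseteq> vars P \<union> vars Q \<and> eq_deriv Md (Inv P) R)"
proof -
  obtain n where n: "smf_level n P" using assms(1) by (auto simp: smf_def)
  have a: "good (Add P Q)" "good (Mul P Q)" "good (Neg P)" "good (Inv P)"
    using good_add[OF n assms(2)] good_mul[OF n assms(2)] good_neg[OF n] good_inv[OF n] by auto
  show ?thesis using good_eq[OF a(1)] good_eq[OF a(2)] good_eq[OF a(3)] good_eq[OF a(4)]
    by auto
qed

end
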